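(* Let $\{Z_t\}$ be random vectors in $\mathcal{Z}$, $\mathcal{M}$ a class of Borel functions $\mathcal{Z}\to\mathbb{R}$, $\ell:\mathcal{Z}\times\mathbb{R}\to\mathbb{R}$ Borel with $\ell(Z_t,f(Z_t))$ integrable, $\ell_t(f):=\ell(Z_t,f(Z_t))$, $Q_n(f)=\frac1n\sum_{t=1}^n\ell_t(f)$, $f_0\in\mathcal{M}$ with $E[Q_n(f_0)]\le E[Q_n(f)]$ for all $f\in\mathcal{M}$, $d_n$ a (semi-)metric on $\mathcal{M}$, $\mathcal{G}_n\subseteq\mathcal{M}$, and $\{\epsilon_n\}$ a positive sequence. Assume: (a.1) there is non-stochastic $f^*_n\in\mathcal{G}_n$ with $d_n(f_n^*,f_0)\le\epsilon_n$ for all $n$; (a.2) there are $C_1,C_2>0$ such that $C_1d_n(f,f_0)^2\le E[Q_n(f)]-E[Q_n(f_0)]\le C_2d_n(f,f_0)^2$ for all $n$ and $f\in\mathcal{G}_n$; (a.3)(iii) there are Borel $m_n:\mathcal{Z}\to[0,\infty)$, positive numbers $b_n$ and a constant $C_3>0$ with $\sup\{E[|\ell_t(f)|\mathbb{1}\{m_n(Z_t)\ge b_n\}]:f\in\mathcal{G}_n,t\in\{1,\dots,n\}\}\le C_3\epsilon_n^2$. For some $c\ge2$ let $\mathcal{H}_n\subset\mathcal{G}_n$ be such that $c\epsilon_n\le d_n(f,f_n^* )$ for each $n$ and all $f\in\mathcal{H}_n$. Then for every $n\in\mathbb{N}$, writing $\mathbb{1}_{nt}=\mathbb{1}\{m_n(Z_t)<b_n\}$,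 $$\sup_{f\in\mathcal{H}_n}\frac1n\sum_{t=1}^n[\ell_t(f_n^* )-\ell_t(f)]\mathbb{1}_{nt}\le\sup_{f\in\mathcal{H}_n}\frac1n\sum_{t=1}^n\Big\{[\ell_t(f_n^* )-\ell_t(f)]\mathbb{1}_{nt}-E\big[(\ell_t(f_n^* )-\ell_t(f))\mathbb{1}_{nt}\big]\Big\}-\big(C_1c^2/4-C_2-2C_3\big)\epsilon_n^2.$$ *)

theory Defs
  imports "HOL-Probability.Probability"
begin

definition loss :: "(nat \<Rightarrow> 'w \<Rightarrow> 'z) \<Rightarrow> ('z \<Rightarrow> real \<Rightarrow> real) \<Rightarrow> nat \<Rightarrow> ('z \<Rightarrow> real) \<Rightarrow> 'w \<Rightarrow> real"
  where "loss Z l t f \<omega> = l (Z t \<omega>) (f (Z t \<omega>))"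

definition Qn :: "(nat \<Rightarrow> 'w \<Rightarrow> 'z) \<Rightarrow> ('z \<Rightarrow> real \<Rightarrow> real) \<Rightarrow> nat \<Rightarrow> ('z \<Rightarrow> real) \<Rightarrow> 'w \<Rightarrow> real"
  where "Qn Z l n f \<omega> = (1 / real n) * (\<Sum>t = 1..n. loss Z l t f \<omega>)"

definition EQn :: "'w measure \<Rightarrow> (nat \<Rightarrow> 'w \<Rightarrow> 'z) \<Rightarrow> ('z \<Rightarrow> real \<Rightarrow> real) \<Rightarrow> nat \<Rightarrow> ('z \<Rightarrow> real) \<Rightarrow> real"
  where "EQn M Z l n f = (\<integral>\<omega>. Qn Z l n f \<omega> \<partial>M)"

definition semimetric_on :: "'a set \<Rightarrow> ('a \<Rightarrow> 'a \<Rightarrow> real) \<Rightarrow> bool"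
  where "semimetric_on S d \<longleftrightarrow>
    (\<forall>x\<in>S. d x x = 0) \<and>
    (\<forall>x\<in>S. \<forall>y\<in>S. d x y \<ge> 0 \<and> d x y = d y x) \<and>
    (\<forall>x\<in>S. \<forall>y\<in>S. \<forall>z\<in>S. d x z \<le> d x y + d y z)"

end

theory Submission
  imports Defs
begin

theorem lemmaC1:
  fixes M :: "'w measure" and N :: "'z measure"
    and Z :: "nat \<Rightarrow> 'w \<Rightarrow> 'z"
    and Mc :: "('z \<Rightarrow> real) set"
    and l :: "'z \<Rightarrow> real \<Rightarrow> real"
    and f0 :: "'z \<Rightarrow> real"
    and d :: "nat \<Rightarrow> ('z \<Rightarrow> real) \<Rightarrow> ('z \<Rightarrow> real) \<Rightarrow> real"
    and G H :: "nat \<Rightarrow> ('z \<Rightarrow> real) set"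
    and eps :: "nat \<Rightarrow> real"
    and fstar :: "nat \<Rightarrow> 'z \<Rightarrow> real"
    and m :: "nat \<Rightarrow> 'z \<Rightarrow> real"
    and b :: "nat \<Rightarrow> real"
    and C1 C2 C3 c :: real
    and n :: nat
  assumes "prob_space M"
    and Z_meas: "\<And>t. Z t \<in> measurable M N"
    and Mc_borel: "Mc \<subseteq> borel_measurable N"
    and l_borel: "(\<lambda>(z, y). l z y) \<in> borel_measurable (N \<Otimes>\<^sub>M borel)"
    and l_int: "\<And>t f. f \<in> Mc \<Longrightarrow> integrable M (loss Z l t f)"
    and f0: "f0 \<in> Mc"
    and f0_min: "\<And>k f. k \<ge> 1 \<Longrightarrow> f \<in> Mc \<Longrightarrow> EQn M Z l k f0 \<le> EQn M Z l k f"
    and d_semi: "\<And>k. semimetric_on Mc (d k)"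
    and G_sub: "\<And>k. G k \<subseteq> Mc"
    and eps_pos: "\<And>k. eps k > 0"
    and a1: "\<And>k. fstar k \<in> G k \<and> d k (fstar k) f0 \<le> eps k"
    and C1: "C1 > 0" and C2: "C2 > 0"
    and a2: "\<And>k f. k \<ge> 1 \<Longrightarrow> f \<in> G k \<Longrightarrow>
               C1 * (d k f f0)\<^sup>2 \<le> EQn M Z l k f - EQn M Z l k f0 \<and>
               EQn M Z l k f - EQn M Z l k f0 \<le> C2 * (d k f f0)\<^sup>2"
    and m_meas: "\<And>k. m k \<in> borel_measurable N"
    and m_nonneg: "\<And>k z. m k z \<ge> 0"
    and b_pos: "\<And>k. b k > 0"
    and C3: "C3 > 0"
    and a3: "\<And>k f t. k \<ge> 1 \<Longrightarrow> f \<in> G k \<Longrightarrow> t \<in> {1..k} \<Longrightarrow>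
               (\<integral>\<omega>. \<bar>loss Z l t f \<omega>\<bar> * indicator {\<omega>. m k (Z t \<omega>) \<ge> b k} \<omega> \<partial>M)
                 \<le> C3 * (eps k)\<^sup>2"
    and c: "c \<ge> 2"
    and H_sub: "\<And>k. H k \<subseteq> G k"
    and H_far: "\<And>k f. f \<in> H k \<Longrightarrow> c * eps k \<le> d k f (fstar k)"
    and n: "n \<ge> 1"
  shows "\<forall>\<omega>\<in>space M.
    (SUP f\<in>H n. ereal ((1 / real n) * (\<Sum>t = 1..n.
        (loss Z l t (fstar n) \<omega> - loss Z l t f \<omega>) * indicator {\<omega>. m n (Z t \<omega>) < b n} \<omega>)))
    \<le> (SUP f\<in>H n. ereal ((1 / real n) * (\<Sum>t = 1..n.
        (loss Z l t (fstar n) \<omega> - loss Z l t f \<omega>) * indicator {\<omega>. m n (Z t \<omega>) < b n} \<omega>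
        - (\<integral>\<omega>'. (loss Z l t (fstar n) \<omega>' - loss Z l t f \<omega>') * indicator {\<omega>'. m n (Z t \<omega>') < b n} \<omega>' \<partial>M))))
      - ereal ((C1 * c\<^sup>2 / 4 - C2 - 2 * C3) * (eps n)\<^sup>2)"
proof -
  interpret P: prob_space M by fact
  define K where "K = (C1 * c\<^sup>2 / 4 - C2 - 2 * C3) * (eps n)\<^sup>2"
  define Ilt where "Ilt = (\<lambda>t \<omega>. indicator {\<omega>. m n (Z t \<omega>) < b n} \<omega> :: real)"
  define Ige where "Ige = (\<lambda>t \<omega>. indicator {\<omega>. m n (Z t \<omega>) \<ge> b n} \<omega> :: real)"
  have mz: "(\<lambda>\<omega>. m n (Z t \<omega>)) \<in> borel_measurable M" for t
    using measurable_compose[OF Z_meas m_meas] by (simp add: comp_def)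
  have Ilt_meas: "Ilt t \<in> borel_measurable M" for t
  proof -
    have "Ilt t = (\<lambda>\<omega>. if m n (Z t \<omega>) < b n then 1 else 0)"
      by (auto simp: Ilt_def indicator_def fun_eq_iff)
    then show ?thesis using mz[of t] by simp
  qed
  have Ige_meas: "Ige t \<in> borel_measurable M" for t
  proof -
    have "Ige t = (\<lambda>\<omega>. if b n \<le> m n (Z t \<omega>) then 1 else 0)"
      by (auto simp: Ige_def indicator_def fun_eq_iff)
    then show ?thesis using mz[of t] by simp
  qed
  have intI: "integrable M (\<lambda>\<omega>. g \<omega> * I \<omega>)"
    if "integrable M g" "I \<in> borel_measurable M" "\<And>\<omega>. \<bar>I \<omega>\<bar> \<le> 1" for g I :: "'w \<Rightarrow> real"
  proof (rule Bochner_Integration.integrable_bound[OF integrable_abs[OF that(1)]])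
    show "(\<lambda>\<omega>. g \<omega> * I \<omega>) \<in> borel_measurable M"
      using that by (simp add: borel_measurable_integrable)
    show "AE x in M. norm (g x * I x) \<le> norm \<bar>g x\<bar>"
      using that(3) by (auto simp: abs_mult intro!: mult_left_le)
  qed
  have Ilt_b: "\<bar>Ilt t \<omega>\<bar> \<le> 1" for t \<omega> by (simp add: Ilt_def indicator_def)
  have Ige_b: "\<bar>Ige t \<omega>\<bar> \<le> 1" for t \<omega> by (simp add: Ige_def indicator_def)
  have fsG: "fstar n \<in> G n" using a1 by blast
  have fsM: "fstar n \<in> Mc" using fsG G_sub by blast
  have EQ: "EQn M Z l n f = (1 / real n) * (\<Sum>t = 1..n. \<integral>\<omega>. loss Z l t f \<omega> \<partial>M)"
    if "f \<in> Mc" for f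
    unfolding EQn_def Qn_def
    using l_int that by (simp add: integral_sum)
  have key: "(1 / real n) * (\<Sum>t = 1..n. (\<integral>\<omega>'. (loss Z l t (fstar n) \<omega>' - loss Z l t f \<omega>') * Ilt t \<omega>' \<partial>M)) \<le> - K"
    if fH: "f \<in> H n" for f
  proof -
    have fG: "f \<in> G n" using fH H_sub by blast
    have fM: "f \<in> Mc" using fG G_sub by blast
    have pt: "\<integral>\<omega>'. (loss Z l t (fstar n) \<omega>' - loss Z l t f \<omega>') * Ilt t \<omega>' \<partial>M
       \<le> (\<integral>\<omega>. loss Z l t (fstar n) \<omega> \<partial>M) - (\<integral>\<omega>. loss Z l t f \<omega> \<partial>M) + 2 * C3 * (eps n)\<^sup>2"
      if t: "t \<in> {1..n}" for t
    proof -
      let ?a = "loss Z l t (fstar n)" and ?g = "loss Z l t f"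
      have ia: "integrable M ?a" using l_int fsM by blast
      have ig: "integrable M ?g" using l_int fM by blast
      have i1: "integrable M (\<lambda>\<omega>. (?a \<omega> - ?g \<omega>) * Ilt t \<omega>)"
        by (rule intI) (use ia ig Ilt_meas Ilt_b in auto)
      have i2: "integrable M (\<lambda>\<omega>. \<bar>?a \<omega>\<bar> * Ige t \<omega>)"
        by (rule intI) (use ia Ige_meas Ige_b in auto)
      have i3: "integrable M (\<lambda>\<omega>. \<bar>?g \<omega>\<bar> * Ige t \<omega>)"
        by (rule intI) (use ig Ige_meas Ige_b in auto)
      have "(\<integral>\<omega>. (?a \<omega> - ?g \<omega>) * Ilt t \<omega> \<partial>M)
          \<le> (\<integral>\<omega>. (?a \<omega> - ?g \<omega>) + \<bar>?a \<omega>\<bar> * Ige t \<omega> + \<bar>?g \<omega>\<bar> * Ige t \<omega> \<partial>M)"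
      proof (rule integral_mono)
        show "integrable M (\<lambda>\<omega>. (?a \<omega> - ?g \<omega>) + \<bar>?a \<omega>\<bar> * Ige t \<omega> + \<bar>?g \<omega>\<bar> * Ige t \<omega>)"
          using ia ig i2 i3 by auto
        show "(?a \<omega> - ?g \<omega>) * Ilt t \<omega> \<le> (?a \<omega> - ?g \<omega>) + \<bar>?a \<omega>\<bar> * Ige t \<omega> + \<bar>?g \<omega>\<bar> * Ige t \<omega>" for \<omega>
          by (auto simp: Ilt_def Ige_def indicator_def)
      qed (fact i1)
      also have "\<dots> = (\<integral>\<omega>. ?a \<omega> \<partial>M) - (\<integral>\<omega>. ?g \<omega> \<partial>M) + (\<integral>\<omega>. \<bar>?a \<omega>\<bar> * Ige t \<omega> \<partial>M) + (\<integral>\<omega>. \<bar>?g \<omega>\<bar> * Ige t \<omega> \<partial>M)"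
        using ia ig i2 i3 by simp
      also have "\<dots> \<le> (\<integral>\<omega>. ?a \<omega> \<partial>M) - (\<integral>\<omega>. ?g \<omega> \<partial>M) + C3 * (eps n)\<^sup>2 + C3 * (eps n)\<^sup>2"
        using a3[OF n fsG t] a3[OF n fG t] unfolding Ige_def by linarith
      finally show ?thesis by simp
    qed
    have "(1 / real n) * (\<Sum>t = 1..n. (\<integral>\<omega>'. (loss Z l t (fstar n) \<omega>' - loss Z l t f \<omega>') * Ilt t \<omega>' \<partial>M))
       \<le> (1 / real n) * (\<Sum>t = 1..n. (\<integral>\<omega>. loss Z l t (fstar n) \<omega> \<partial>M) - (\<integral>\<omega>. loss Z l t f \<omega> \<partial>M) + 2 * C3 * (eps n)\<^sup>2)"
      by (intro mult_left_mono sum_mono pt) auto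
    also have "\<dots> = EQn M Z l n (fstar n) - EQn M Z l n f + 2 * C3 * (eps n)\<^sup>2"
      using n by (simp add: EQ fsM fM sum.distrib sum_subtractf field_simps)
    also have "\<dots> \<le> C2 * (eps n)\<^sup>2 - C1 * (c * eps n / 2)\<^sup>2 + 2 * C3 * (eps n)\<^sup>2"
    proof -
      have d1: "d n (fstar n) f0 \<le> eps n" and d0: "0 \<le> d n (fstar n) f0" using a1 d_semi[of n] fsM f0
        unfolding semimetric_on_def by auto
      have "c * eps n \<le> d n f (fstar n)" using H_far fH by blast
      also have "\<dots> \<le> d n f f0 + d n f0 (fstar n)" using d_semi[of n] fM fsM f0
        unfolding semimetric_on_def by blast
      also have "d n f0 (fstar n) = d n (fstar n) f0" using d_semi[of n] fsM f0
        unfolding semimetric_on_def by auto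
      finally have "c * eps n - eps n \<le> d n f f0" using d1 by linarith
      moreover have "c * eps n / 2 \<le> c * eps n - eps n" using c eps_pos[of n]
      proof -
        have "0 \<le> (c - 2) * eps n" using c eps_pos[of n] by simp
        then show ?thesis by (simp add: algebra_simps)
      qed
      ultimately have dd: "c * eps n / 2 \<le> d n f f0" by linarith
      have cp: "0 \<le> c * eps n / 2" using c eps_pos[of n] by simp
      have "(c * eps n / 2)\<^sup>2 \<le> (d n f f0)\<^sup>2" using power_mono[OF dd cp] .
      hence A: "C1 * (c * eps n / 2)\<^sup>2 \<le> C1 * (d n f f0)\<^sup>2" using C1 by simp
      have B: "(d n (fstar n) f0)\<^sup>2 \<le> (eps n)\<^sup>2" using power_mono[OF d1 d0] .
      hence B': "C2 * (d n (fstar n) f0)\<^sup>2 \<le> C2 * (eps n)\<^sup>2" using C2 by simp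
      show ?thesis using a2[OF n fG] a2[OF n fsG] A B' by linarith
    qed
    also have "\<dots> = - K" unfolding K_def by (simp add: power_mult_distrib field_simps)
    finally show ?thesis .
  qed
  show ?thesis
  proof
    fix \<omega> assume "\<omega> \<in> space M"
    let ?A = "\<lambda>f. (1 / real n) * (\<Sum>t = 1..n. (loss Z l t (fstar n) \<omega> - loss Z l t f \<omega>) * Ilt t \<omega>)"
    let ?E = "\<lambda>f. (1 / real n) * (\<Sum>t = 1..n. (\<integral>\<omega>'. (loss Z l t (fstar n) \<omega>' - loss Z l t f \<omega>') * Ilt t \<omega>' \<partial>M))"
    let ?B = "\<lambda>f. (1 / real n) * (\<Sum>t = 1..n. (loss Z l t (fstar n) \<omega> - loss Z l t f \<omega>) * Ilt t \<omega>
        - (\<integral>\<omega>'. (loss Z l t (fstar n) \<omega>' - loss Z l t f \<omega>') * Ilt t \<omega>' \<partial>M))"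
    have "(SUP f\<in>H n. ereal (?A f)) \<le> (SUP f\<in>H n. ereal (?B f)) - ereal K"
    proof (rule SUP_least)
      fix f assume fH: "f \<in> H n"
      have "?B f = ?A f - ?E f" by (simp add: sum_subtractf right_diff_distrib)
      hence "?A f \<le> ?B f - K" using key[OF fH] by linarith
      hence "ereal (?A f) \<le> ereal (?B f) - ereal K" by simp
      also have "\<dots> \<le> (SUP f\<in>H n. ereal (?B f)) - ereal K"
        by (intro ereal_minus_mono SUP_upper fH) simp
      finally show "ereal (?A f) \<le> (SUP f\<in>H n. ereal (?B f)) - ereal K" .
    qed
    then show "(SUP f\<in>H n. ereal ((1 / real n) * (\<Sum>t = 1..n.
        (loss Z l t (fstar n) \<omega> - loss Z l t f \<omega>) * indicator {\<omega>. m n (Z t \<omega>) < b n} \<omega>)))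
    \<le> (SUP f\<in>H n. ereal ((1 / real n) * (\<Sum>t = 1..n.
        (loss Z l t (fstar n) \<omega> - loss Z l t f \<omega>) * indicator {\<omega>. m n (Z t \<omega>) < b n} \<omega>
        - (\<integral>\<omega>'. (loss Z l t (fstar n) \<omega>' - loss Z l t f \<omega>') * indicator {\<omega>'. m n (Z t \<omega>') < b n} \<omega>' \<partial>M))))
      - ereal ((C1 * c\<^sup>2 / 4 - C2 - 2 * C3) * (eps n)\<^sup>2)"
      unfolding Ilt_def K_def by simp
  qed
qed

end
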